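(* Let $A\in\mathbb{R}^{m\times n}$ have no zero row, with rows $a_1^T,\dots,a_m^T$, let ${\bf u}=(\mu_1,\dots,\mu_m)\in\mathbb{R}^m$, $P_k(\mu_k)=I-\mu_k a_ka_k^T/\|a_k\|_2^2$, $Q_i({\bf u}_i)=P_m(\mu_m)\cdots P_{i+1}(\mu_{i+1})$ for $1\le i\le m-1$, $Q_m({\bf u}_m)=I$, and $A_{\mathcal S}({\bf u})=(Q_1({\bf u}_1)a_1,\dots,Q_m({\bf u}_m)a_m)^T$. Let $h_{k,l}=a_k^Ta_l/\|a_l\|_2^2$ and, for $1\le i<j\le m$, $$d_{i,j}({\bf u}_i)=\sum_{v=2}^{j-i+1}(-1)^{v-1}\sum_{i=t_1<t_2<\dots<t_v=j}\ \prod_{s=1}^{v-1}\mu_{t_{s+1}}\prod_{s=1}^{v-1}h_{t_s,t_{s+1}},$$ the inner sum being over strictly increasing integer sequences from $i$ to $j$ of length $v$. Define $\Omega({\bf u})=(\omega_{i,j})\in\mathbb{R}^{m\times m}$ by $\omega_{i,j}=d_{i,j}({\bf u}_i)$ if $j>i$, $\omega_{i,i}=1$, and $\omega_{i,j}=0$ if $j<i$. Then $$A_{\mathcal S}({\bf u})=\Omega({\bf u})A.$$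
   Context: ${\bf u}_i=(\mu_{i+1},\dots,\mu_m)$. *)

theory Defs
  imports Complex_Main
begin

text \<open>Matrices are represented as functions nat => nat => real, with 1-based
indices; an m x n matrix A has entries A r c for r in {1..m}, c in {1..n}.\<close>

definition mmul :: "nat \<Rightarrow> (nat \<Rightarrow> nat \<Rightarrow> real) \<Rightarrow> (nat \<Rightarrow> nat \<Rightarrow> real) \<Rightarrow> nat \<Rightarrow> nat \<Rightarrow> real" where
  "mmul p X Y r c = (\<Sum>k = 1..p. X r k * Y k c)"

definition idm :: "nat \<Rightarrow> nat \<Rightarrow> real" where
  "idm r c = (if r = c then 1 else 0)"

definition rownorm2 :: "nat \<Rightarrow> (nat \<Rightarrow> nat \<Rightarrow> real) \<Rightarrow> nat \<Rightarrow> real" where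
  "rownorm2 n A k = (\<Sum>c = 1..n. (A k c)\<^sup>2)"

definition Pmat :: "nat \<Rightarrow> (nat \<Rightarrow> nat \<Rightarrow> real) \<Rightarrow> nat \<Rightarrow> real \<Rightarrow> nat \<Rightarrow> nat \<Rightarrow> real" where
  "Pmat n A k \<mu> r c = idm r c - \<mu> * A k r * A k c / rownorm2 n A k"

text \<open>Qaux j = P_m(mu_m) ... P_{m-j+1}(mu_{m-j+1}) (empty product = I)\<close>
primrec Qaux :: "nat \<Rightarrow> nat \<Rightarrow> (nat \<Rightarrow> nat \<Rightarrow> real) \<Rightarrow> (nat \<Rightarrow> real) \<Rightarrow> nat \<Rightarrow> nat \<Rightarrow> nat \<Rightarrow> real" where
  "Qaux m n A u 0 = idm"
| "Qaux m n A u (Suc j) = mmul n (Qaux m n A u j) (Pmat n A (m - j) (u (m - j)))"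

definition Qmat :: "nat \<Rightarrow> nat \<Rightarrow> (nat \<Rightarrow> nat \<Rightarrow> real) \<Rightarrow> (nat \<Rightarrow> real) \<Rightarrow> nat \<Rightarrow> nat \<Rightarrow> nat \<Rightarrow> real" where
  "Qmat m n A u i = Qaux m n A u (m - i)"

definition AS :: "nat \<Rightarrow> nat \<Rightarrow> (nat \<Rightarrow> nat \<Rightarrow> real) \<Rightarrow> (nat \<Rightarrow> real) \<Rightarrow> nat \<Rightarrow> nat \<Rightarrow> real" where
  "AS m n A u i r = (\<Sum>c = 1..n. Qmat m n A u i r c * A i c)"

definition hcoef :: "nat \<Rightarrow> (nat \<Rightarrow> nat \<Rightarrow> real) \<Rightarrow> nat \<Rightarrow> nat \<Rightarrow> real" where
  "hcoef n A k l = (\<Sum>c = 1..n. A k c * A l c) / rownorm2 n A l"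

definition incseqs :: "nat \<Rightarrow> nat \<Rightarrow> nat \<Rightarrow> nat list set" where
  "incseqs v i j = {ts. length ts = v \<and> sorted_wrt (<) ts \<and> ts ! 0 = i \<and> ts ! (v - 1) = j}"

definition dcoef :: "nat \<Rightarrow> (nat \<Rightarrow> nat \<Rightarrow> real) \<Rightarrow> (nat \<Rightarrow> real) \<Rightarrow> nat \<Rightarrow> nat \<Rightarrow> real" where
  "dcoef n A u i j = (\<Sum>v = 2..j - i + 1. (-1) ^ (v - 1) *
      (\<Sum>ts \<in> incseqs v i j.
         (\<Prod>s < v - 1. u (ts ! (s + 1))) * (\<Prod>s < v - 1. hcoef n A (ts ! s) (ts ! (s + 1)))))"

definition Omega :: "nat \<Rightarrow> (nat \<Rightarrow> nat \<Rightarrow> real) \<Rightarrow> (nat \<Rightarrow> real) \<Rightarrow> nat \<Rightarrow> nat \<Rightarrow> real" where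
  "Omega n A u i j = (if j > i then dcoef n A u i j else if j = i then 1 else 0)"

end

theory Submission
  imports Defs
begin

definition cc :: "nat \<Rightarrow> (nat \<Rightarrow> nat \<Rightarrow> real) \<Rightarrow> (nat \<Rightarrow> real) \<Rightarrow> nat \<Rightarrow> nat \<Rightarrow> nat \<Rightarrow> real" where
  "cc n A u v i j = (\<Sum>ts \<in> incseqs v i j.
         (\<Prod>s < v - 1. u (ts ! (s + 1))) * (\<Prod>s < v - 1. hcoef n A (ts ! s) (ts ! (s + 1))))"

lemma dcoef_cc: "dcoef n A u i j = (\<Sum>v = 2..j - i + 1. (-1) ^ (v - 1) * cc n A u v i j)"
  unfolding dcoef_def cc_def by simp

lemma sorted_nth_ge:
  assumes "sorted_wrt (<) (ts::nat list)" "l < length ts"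
  shows "ts ! 0 + l \<le> ts ! l"
  using assms(2)
proof (induction l)
  case 0 then show ?case by simp
next
  case (Suc l)
  have "ts ! l < ts ! Suc l" using assms(1) Suc.prems by (simp add: sorted_wrt_nth_less)
  then show ?case using Suc by simp
qed

lemma sorted_nth_le:
  assumes "sorted_wrt (<) (ts::nat list)" "l < length ts"
  shows "ts ! l \<le> ts ! (length ts - 1)"
proof (cases "l = length ts - 1")
  case True then show ?thesis by simp
next
  case False
  then have "l < length ts - 1" using assms(2) by simp
  then show ?thesis using assms sorted_wrt_nth_less[OF assms(1), of l "length ts - 1"]
    by (simp add: less_imp_le)
qed

lemma incseqs_bound: "ts \<in> incseqs v i j \<Longrightarrow> 1 \<le> v \<Longrightarrow> i + (v - 1) \<le> j"
  unfolding incseqs_def using sorted_nth_ge[of ts "v - 1"] by auto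

lemma incseqs_set: "ts \<in> incseqs v i j \<Longrightarrow> 1 \<le> v \<Longrightarrow> set ts \<subseteq> {i..j}"
proof
  fix x assume a: "ts \<in> incseqs v i j" "1 \<le> v" "x \<in> set ts"
  then obtain l where l: "l < length ts" "x = ts ! l" by (auto simp: in_set_conv_nth)
  have s: "sorted_wrt (<) ts" "length ts = v" "ts ! 0 = i" "ts ! (v-1) = j" using a(1) by (auto simp: incseqs_def)
  show "x \<in> {i..j}" using sorted_nth_ge[OF s(1) l(1)] sorted_nth_le[OF s(1) l(1)] s l by auto
qed

lemma incseqs_finite: "1 \<le> v \<Longrightarrow> finite (incseqs v i j)"
proof -
  assume v: "1 \<le> v"
  have "incseqs v i j \<subseteq> {ts. set ts \<subseteq> {i..j} \<and> length ts = v}"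
    using incseqs_set[OF _ v] by (auto simp: incseqs_def)
  moreover have "finite {ts. set ts \<subseteq> {i..j} \<and> length ts = v}"
    by (rule finite_lists_length_eq) simp
  ultimately show ?thesis by (rule finite_subset)
qed

lemma incseqs_big_empty: "1 \<le> v \<Longrightarrow> j < i + (v - 1) \<Longrightarrow> incseqs v i j = {}"
  using incseqs_bound by fastforce

lemma cc_big: "1 \<le> v \<Longrightarrow> j < i + (v - 1) \<Longrightarrow> cc n A u v i j = 0"
  unfolding cc_def using incseqs_big_empty by simp

lemma incseqs_one: "incseqs 1 i j = (if j = i then {[i]} else {})"
  unfolding incseqs_def
  apply (auto simp: length_Suc_conv)
  done

lemma cc_one: "cc n A u 1 i j = (if j = i then 1 else 0)"
  unfolding cc_def incseqs_one by simp

lemma cc_one0: "cc n A u (Suc 0) i j = (if j = i then 1 else 0)"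
  using cc_one by (metis One_nat_def)

lemma incseqs_Suc:
  assumes v: "1 \<le> v"
  shows "incseqs (Suc v) i k = (\<lambda>ts. ts @ [k]) ` (\<Union>j\<in>{..<k}. incseqs v i j)"
proof
  show "incseqs (Suc v) i k \<subseteq> (\<lambda>ts. ts @ [k]) ` (\<Union>j\<in>{..<k}. incseqs v i j)"
  proof
    fix ts assume a: "ts \<in> incseqs (Suc v) i k"
    then have s: "sorted_wrt (<) ts" "length ts = Suc v" "ts ! 0 = i" "ts ! v = k"
      by (auto simp: incseqs_def)
    then have ne: "ts \<noteq> []" by auto
    have e: "ts = butlast ts @ [k]"
      using ne s by (metis append_butlast_last_id diff_Suc_1 last_conv_nth)
    have lt: "ts ! (v - 1) < k" using s v sorted_wrt_nth_less[OF s(1), of "v-1" v] by simp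
    have sb: "sorted_wrt (<) (butlast ts)" using s(1) e by (metis sorted_wrt_append)
    have "butlast ts \<in> incseqs v i (ts ! (v - 1))"
      unfolding incseqs_def using s sb v by (auto simp: nth_butlast)
    then show "ts \<in> (\<lambda>ts. ts @ [k]) ` (\<Union>j\<in>{..<k}. incseqs v i j)"
      using lt e by blast
  qed
next
  show "(\<lambda>ts. ts @ [k]) ` (\<Union>j\<in>{..<k}. incseqs v i j) \<subseteq> incseqs (Suc v) i k"
  proof
    fix x assume "x \<in> (\<lambda>ts. ts @ [k]) ` (\<Union>j\<in>{..<k}. incseqs v i j)"
    then obtain ts j where x: "x = ts @ [k]" and j: "j < k" and ts: "ts \<in> incseqs v i j" by auto
    have s: "sorted_wrt (<) ts" "length ts = v" "ts ! 0 = i" "ts ! (v-1) = j"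
      using ts by (auto simp: incseqs_def)
    have "set ts \<subseteq> {i..j}" using incseqs_set[OF ts v] .
    then have "\<forall>y\<in>set ts. y < k" using j by auto
    then have "sorted_wrt (<) x" using s(1) x by (simp add: sorted_wrt_append)
    then show "x \<in> incseqs (Suc v) i k" unfolding incseqs_def using x s v
      by (auto simp: nth_append)
  qed
qed

lemma cc_Suc:
  assumes v: "1 \<le> v"
  shows "cc n A u (Suc v) i k = u k * (\<Sum>j<k. cc n A u v i j * hcoef n A j k)"
proof -
  let ?w = "\<lambda>ts. (\<Prod>s < v. u (ts ! (s + 1))) * (\<Prod>s < v. hcoef n A (ts ! s) (ts ! (s + 1)))"
  let ?w' = "\<lambda>ts. (\<Prod>s < v - 1. u (ts ! (s + 1))) * (\<Prod>s < v - 1. hcoef n A (ts ! s) (ts ! (s + 1)))"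
  have "cc n A u (Suc v) i k = (\<Sum>ts \<in> (\<lambda>ts. ts @ [k]) ` (\<Union>j\<in>{..<k}. incseqs v i j). ?w ts)"
    unfolding cc_def incseqs_Suc[OF v] by simp
  also have "\<dots> = (\<Sum>ts \<in> (\<Union>j\<in>{..<k}. incseqs v i j). ?w (ts @ [k]))"
    by (subst sum.reindex) (auto simp: inj_on_def)
  also have "\<dots> = (\<Sum>j<k. \<Sum>ts \<in> incseqs v i j. ?w (ts @ [k]))"
  proof (rule sum.UNION_disjoint)
    show "finite {..<k}" by simp
    show "\<forall>j\<in>{..<k}. finite (incseqs v i j)" using incseqs_finite[OF v] by simp
    show "\<forall>j\<in>{..<k}. \<forall>j'\<in>{..<k}. j \<noteq> j' \<longrightarrow> incseqs v i j \<inter> incseqs v i j' = {}"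
      by (auto simp: incseqs_def)
  qed
  also have "\<dots> = (\<Sum>j<k. \<Sum>ts \<in> incseqs v i j. ?w' ts * (u k * hcoef n A j k))"
  proof (intro sum.cong refl)
    fix j ts assume ts: "ts \<in> incseqs v i j"
    have s: "length ts = v" "ts ! (v-1) = j" using ts by (auto simp: incseqs_def)
    obtain v' where v': "v = Suc v'" using v by (cases v) auto
    have p1: "(\<Prod>s < v. u ((ts @ [k]) ! (s + 1))) = (\<Prod>s < v'. u (ts ! (s + 1))) * u k"
      using s v' by (simp add: nth_append)
    have p2: "(\<Prod>s < v. hcoef n A ((ts @ [k]) ! s) ((ts @ [k]) ! (s + 1))) =
       (\<Prod>s < v'. hcoef n A (ts ! s) (ts ! (s + 1))) * hcoef n A j k"
      using s v' by (simp add: nth_append)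
    show "?w (ts @ [k]) = ?w' ts * (u k * hcoef n A j k)"
      using p1 p2 v' by simp
  qed
  also have "\<dots> = u k * (\<Sum>j<k. cc n A u v i j * hcoef n A j k)"
    unfolding cc_def by (simp add: sum_distrib_left sum_distrib_right mult_ac)
  finally show ?thesis .
qed

lemma dcoef_rec:
  assumes ik: "i < k"
  shows "dcoef n A u i k = - u k * (hcoef n A i k + (\<Sum>j\<in>{i<..<k}. dcoef n A u i j * hcoef n A j k))"
proof -
  let ?c = "\<lambda>v j. cc n A u v i j"
  let ?H = "\<lambda>j. hcoef n A j k"
  let ?g = "\<lambda>j. \<Sum>v\<in>{1..k-i}. (-1::real) ^ v * ?c v j"
  have eq: "{2..k - i + 1} = {Suc 1..Suc (k-i)}" by simp
  have "dcoef n A u i k = (\<Sum>v\<in>{Suc 1..Suc (k-i)}. (-1) ^ (v - 1) * ?c v k)"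
    by (simp only: dcoef_cc eq)
  also have "\<dots> = (\<Sum>v\<in>{1..k-i}. (-1) ^ v * ?c (Suc v) k)"
    by (subst sum.shift_bounds_cl_Suc_ivl) simp
  also have "\<dots> = (\<Sum>v\<in>{1..k-i}. (-1) ^ v * (u k * (\<Sum>j\<in>{i..<k}. ?c v j * ?H j)))"
  proof (rule sum.cong[OF refl])
    fix v assume v: "v \<in> {1..k-i}"
    have "(\<Sum>j<k. ?c v j * ?H j) = (\<Sum>j\<in>{i..<k}. ?c v j * ?H j)"
    proof (rule sum.mono_neutral_cong_right)
      show "\<forall>j\<in>{..<k} - {i..<k}. ?c v j * ?H j = 0" using v cc_big[of v] by auto
    qed auto
    then show "(-1) ^ v * ?c (Suc v) k = (-1) ^ v * (u k * (\<Sum>j\<in>{i..<k}. ?c v j * ?H j))"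
      using cc_Suc[of v] v by simp
  qed
  also have "\<dots> = u k * (\<Sum>j\<in>{i..<k}. ?H j * ?g j)"
    by (simp add: sum_distrib_left sum_distrib_right mult_ac sum.swap[of _ "{i..<k}"])
  also have "\<dots> = u k * (?H i * (-1) + (\<Sum>j\<in>{i<..<k}. ?H j * (- dcoef n A u i j)))"
  proof -
    have e: "{i..<k} = insert i {i<..<k}" using ik by auto
    have gi: "?g i = -1"
    proof -
      have "{1..k-i} = insert 1 {2..k-i}" using ik by auto
      moreover have "(\<Sum>v\<in>{2..k-i}. (-1::real) ^ v * ?c v i) = 0"
        using cc_big by (intro sum.neutral) auto
      ultimately show ?thesis by (simp add: cc_one cc_one0)
    qed
    have gj: "?g j = - dcoef n A u i j" if j: "j \<in> {i<..<k}" for j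
    proof -
      have "{1..k-i} = insert 1 {2..k-i}" using j by auto
      then have "?g j = (\<Sum>v\<in>{2..k-i}. (-1::real) ^ v * ?c v j)"
        using j by (simp add: cc_one cc_one0)
      also have "\<dots> = (\<Sum>v\<in>{2..j-i+1}. (-1::real) ^ v * ?c v j)"
      proof (rule sum.mono_neutral_right)
        show "\<forall>v\<in>{2..k - i} - {2..j - i + 1}. (-1::real) ^ v * ?c v j = 0"
          using cc_big by auto
      qed (use j in auto)
      also have "\<dots> = - dcoef n A u i j"
        unfolding dcoef_cc sum_negf[symmetric]
      proof (rule sum.cong[OF refl])
        fix v :: nat assume "v \<in> {2..j-i+1}"
        then obtain w where "v = Suc w" by (cases v) auto
        then show "(-1) ^ v * ?c v j = - ((-1) ^ (v - 1) * ?c v j)" by simp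
      qed
      finally show ?thesis .
    qed
    show ?thesis unfolding e using gi gj by (simp add: sum.insert)
  qed
  also have "\<dots> = - u k * (?H i + (\<Sum>j\<in>{i<..<k}. dcoef n A u i j * ?H j))"
    by (simp add: sum_negf algebra_simps)
  finally show ?thesis .
qed

definition Pv :: "nat \<Rightarrow> (nat \<Rightarrow> nat \<Rightarrow> real) \<Rightarrow> (nat \<Rightarrow> real) \<Rightarrow> nat \<Rightarrow> (nat \<Rightarrow> real) \<Rightarrow> nat \<Rightarrow> real" where
  "Pv n A u k x = (\<lambda>r. \<Sum>c = 1..n. Pmat n A k (u k) r c * x c)"

definition mv :: "nat \<Rightarrow> (nat \<Rightarrow> nat \<Rightarrow> real) \<Rightarrow> (nat \<Rightarrow> real) \<Rightarrow> nat \<Rightarrow> real" where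
  "mv n X x = (\<lambda>r. \<Sum>c = 1..n. X r c * x c)"

primrec Wv :: "nat \<Rightarrow> (nat \<Rightarrow> nat \<Rightarrow> real) \<Rightarrow> (nat \<Rightarrow> real) \<Rightarrow> nat \<Rightarrow> nat \<Rightarrow> (nat \<Rightarrow> real) \<Rightarrow> nat \<Rightarrow> real" where
  "Wv n A u lo 0 x = x"
| "Wv n A u lo (Suc t) x = Pv n A u (lo + t + 1) (Wv n A u lo t x)"

lemma idm_sum: "r \<in> {1..n} \<Longrightarrow> (\<Sum>c = 1..n. idm r c * x c) = (x r :: real)"
proof -
  assume r: "r \<in> {1..n}"
  have "(\<Sum>c = 1..n. idm r c * x c) = (\<Sum>c\<in>{1..n}. if r = c then x c else 0)"
    by (intro sum.cong) (auto simp: idm_def)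
  also have "\<dots> = x r" using r by (simp add: sum.delta)
  finally show ?thesis .
qed

lemma Pv_eq:
  assumes "r \<in> {1..n}"
  shows "Pv n A u k x r = x r - u k * A k r * (\<Sum>c = 1..n. A k c * x c) / rownorm2 n A k"
proof -
  have "Pv n A u k x r = (\<Sum>c = 1..n. idm r c * x c) - (\<Sum>c = 1..n. u k * A k r * A k c / rownorm2 n A k * x c)"
    unfolding Pv_def Pmat_def by (simp add: sum_subtractf left_diff_distrib)
  also have "\<dots> = x r - u k * A k r * (\<Sum>c = 1..n. A k c * x c) / rownorm2 n A k"
    using idm_sum[OF assms] by (simp add: sum_distrib_left sum_divide_distrib mult_ac)
  finally show ?thesis .
qed

lemma W_shift: "Wv n A u (lo + 1) j (Pv n A u (lo + 1) x) = Wv n A u lo (Suc j) x"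
  by (induction j) simp_all

lemma mv_Qaux_Suc:
  "mv n (Qaux m n A u (Suc j)) x = mv n (Qaux m n A u j) (Pv n A u (m - j) x)"
  unfolding mv_def Pv_def
  by (auto simp: mmul_def sum_distrib_left sum_distrib_right mult_ac intro: sum.swap)

lemma mv_cong: "(\<And>c. c \<in> {1..n} \<Longrightarrow> x c = y c) \<Longrightarrow> mv n X x = mv n X y"
  unfolding mv_def by (intro ext sum.cong) auto

lemma Q_W: "j \<le> m \<Longrightarrow> \<forall>x. \<forall>r\<in>{1..n}. mv n (Qaux m n A u j) x r = Wv n A u (m - j) j x r"
proof (induction j)
  case 0
  show ?case
  proof (intro allI ballI)
    fix x r assume r: "r \<in> {1..n}"
    show "mv n (Qaux m n A u 0) x r = Wv n A u (m - 0) 0 x r"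
      unfolding mv_def Qaux.simps Wv.simps using idm_sum[OF r] by simp
  qed
next
  case (Suc j)
  show ?case
  proof (intro allI ballI)
    fix x r assume r: "r \<in> {1..n}"
    have e: "m - j = (m - Suc j) + 1" using Suc.prems by simp
    have "mv n (Qaux m n A u (Suc j)) x r = mv n (Qaux m n A u j) (Pv n A u (m - j) x) r"
      by (simp only: mv_Qaux_Suc)
    also have "\<dots> = Wv n A u (m - j) j (Pv n A u (m - j) x) r"
      using Suc r by simp
    also have "\<dots> = Wv n A u (m - Suc j) (Suc j) x r"
      unfolding e W_shift ..
    finally show "mv n (Qaux m n A u (Suc j)) x r = Wv n A u (m - Suc j) (Suc j) x r" .
  qed
qed

lemma W_formula:
  "\<forall>r\<in>{1..n}. Wv n A u i t (\<lambda>c. A i c) r = A i r + (\<Sum>j\<in>{i<..i+t}. dcoef n A u i j * A j r)"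
proof (induction t)
  case 0
  then show ?case by simp
next
  case (Suc t)
  show ?case
  proof
    fix r assume r: "r \<in> {1..n}"
    let ?k = "i + t + 1"
    let ?x = "Wv n A u i t (\<lambda>c. A i c)"
    let ?N = "rownorm2 n A ?k"
    have "(\<Sum>c = 1..n. A ?k c * ?x c) = (\<Sum>c = 1..n. A ?k c * (A i c + (\<Sum>j\<in>{i<..i+t}. dcoef n A u i j * A j c)))"
      using Suc.IH by (intro sum.cong) auto
    also have "\<dots> = (\<Sum>c = 1..n. A i c * A ?k c) + (\<Sum>j\<in>{i<..i+t}. dcoef n A u i j * (\<Sum>c = 1..n. A j c * A ?k c))"
      by (simp add: algebra_simps sum.distrib sum_distrib_left sum.swap[of _ "{i<..i+t}"])
    finally have S: "(\<Sum>c = 1..n. A ?k c * ?x c) / ?N = hcoef n A i ?k + (\<Sum>j\<in>{i<..<?k}. dcoef n A u i j * hcoef n A j ?k)"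
    proof -
      assume h: "(\<Sum>c = 1..n. A ?k c * ?x c) = (\<Sum>c = 1..n. A i c * A ?k c) + (\<Sum>j\<in>{i<..i+t}. dcoef n A u i j * (\<Sum>c = 1..n. A j c * A ?k c))"
      have "{i<..<?k} = {i<..i+t}" by auto
      have "(\<Sum>j\<in>{i<..i+t}. dcoef n A u i j * (\<Sum>c = 1..n. A j c * A ?k c)) / ?N
         = (\<Sum>j\<in>{i<..i+t}. dcoef n A u i j * hcoef n A j ?k)"
        unfolding sum_divide_distrib by (intro sum.cong refl) (simp add: hcoef_def)
      then show ?thesis unfolding h add_divide_distrib using \<open>{i<..<?k} = {i<..i+t}\<close>
        by (simp add: hcoef_def)
    qed
    have d: "dcoef n A u i ?k = - u ?k * (hcoef n A i ?k + (\<Sum>j\<in>{i<..<?k}. dcoef n A u i j * hcoef n A j ?k))"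
      by (rule dcoef_rec) simp
    have "Wv n A u i (Suc t) (\<lambda>c. A i c) r = ?x r - u ?k * A ?k r * ((\<Sum>c = 1..n. A ?k c * ?x c) / ?N)"
      using Pv_eq[OF r] by simp
    also have "\<dots> = ?x r + dcoef n A u i ?k * A ?k r"
      unfolding S d by simp
    also have "\<dots> = A i r + (\<Sum>j\<in>{i<..i+Suc t}. dcoef n A u i j * A j r)"
    proof -
      have "{i<..i+Suc t} = insert ?k {i<..i+t}" by auto
      then show ?thesis using Suc.IH r by (simp add: add.assoc)
    qed
    finally show "Wv n A u i (Suc t) (\<lambda>c. A i c) r = A i r + (\<Sum>j\<in>{i<..i+Suc t}. dcoef n A u i j * A j r)" .
  qed
qed

theorem theorem3p8:
  fixes m n :: nat and A :: "nat \<Rightarrow> nat \<Rightarrow> real" and u :: "nat \<Rightarrow> real"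
  assumes nozero: "\<forall>k \<in> {1..m}. \<exists>c \<in> {1..n}. A k c \<noteq> 0"
  shows "\<forall>i \<in> {1..m}. \<forall>r \<in> {1..n}. AS m n A u i r = mmul m (Omega n A u) A i r"
proof (intro ballI)
  fix i r assume i: "i \<in> {1..m}" and r: "r \<in> {1..n}"
  have "AS m n A u i r = mv n (Qaux m n A u (m - i)) (\<lambda>c. A i c) r"
    unfolding AS_def mv_def Qmat_def by simp
  also have "\<dots> = Wv n A u i (m - i) (\<lambda>c. A i c) r"
    using Q_W[of "m - i" m n A u] r i by simp
  also have "\<dots> = A i r + (\<Sum>j\<in>{i<..m}. dcoef n A u i j * A j r)"
    using W_formula[of n A u i "m - i"] r i by simp
  also have "\<dots> = mmul m (Omega n A u) A i r"
  proof -
    have e: "{1..m} = {1..<i} \<union> insert i {i<..m}" using i by auto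
    have "mmul m (Omega n A u) A i r = (\<Sum>k\<in>{1..<i}. Omega n A u i k * A k r) + (Omega n A u i i * A i r + (\<Sum>k\<in>{i<..m}. Omega n A u i k * A k r))"
      unfolding mmul_def e by (subst sum.union_disjoint) (auto simp: sum.insert)
    also have "\<dots> = A i r + (\<Sum>j\<in>{i<..m}. dcoef n A u i j * A j r)"
      by (simp add: Omega_def)
    finally show ?thesis by simp
  qed
  finally show "AS m n A u i r = mmul m (Omega n A u) A i r" .
qed

end
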